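(* Let $n\ge1$, suppose $\lambda\ge\frac{n+2}{n}$ and $\gamma=\frac{n+2-\varepsilon}{2\lambda}$ for some $\varepsilon\in(0,1)$. Then there exists a $C^\infty$ positive solution $u$ of $u_t-\Delta u=0$ in $\mathbb{R}^n\times(0,\infty)$ such that $u\in L^\lambda(\mathbb{R}^n\times(0,T))$ for all $T>0$ and $u(0,t)=t^{-\gamma}$ for all $t>0$. *)

theory Defs
  imports "HOL-Analysis.Analysis"
begin

definition pdiff :: "'a::euclidean_space \<Rightarrow> ('a \<Rightarrow> real) \<Rightarrow> 'a \<Rightarrow> real" where
  "pdiff e f z = frechet_derivative f (at z) e"

fun Ck_on :: "nat \<Rightarrow> 'a::euclidean_space set \<Rightarrow> ('a \<Rightarrow> real) \<Rightarrow> bool" where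
  "Ck_on 0 S f = continuous_on S f"
| "Ck_on (Suc k) S f = (continuous_on S f \<and> f differentiable_on S \<and>
      (\<forall>e\<in>Basis. Ck_on k S (pdiff e f)))"

definition smooth_on :: "'a::euclidean_space set \<Rightarrow> ('a \<Rightarrow> real) \<Rightarrow> bool" where
  "smooth_on S f = (\<forall>k. Ck_on k S f)"

end

theory Submission
  imports Defs
begin

lemma pdiff_has_derivative:
  "(f has_derivative f') (at z) \<Longrightarrow> pdiff e f z = f' e"
  unfolding pdiff_def using frechet_derivative_at by metis

lemma pdiff_cong:
  assumes "open S" "z \<in> S" "\<And>y. y \<in> S \<Longrightarrow> f y = g y"
  shows "pdiff e f z = pdiff e g z"
proof -
  have "(\<lambda>f'. (f has_derivative f') (at z)) = (\<lambda>f'. (g has_derivative f') (at z))"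
  proof (rule ext, rule iffI)
    fix f' assume "(f has_derivative f') (at z)"
    then show "(g has_derivative f') (at z)"
      by (rule has_derivative_transform_within_open[OF _ assms(1,2)]) (simp add: assms(3))
  next
    fix f' assume "(g has_derivative f') (at z)"
    then show "(f has_derivative f') (at z)"
      by (rule has_derivative_transform_within_open[OF _ assms(1,2)]) (simp add: assms(3))
  qed
  then show ?thesis unfolding pdiff_def frechet_derivative_def by simp
qed

lemma Ck_on_mono: "Ck_on (Suc k) S f \<Longrightarrow> Ck_on k S f"
proof (induction k arbitrary: f)
  case 0 then show ?case by simp
next
  case (Suc k) then show ?case by (metis Ck_on.simps(2))
qed

  
lemma Ck_on_differentiable:
  assumes "open S" "Ck_on (Suc k) S f" "z \<in> S"
  shows "f differentiable (at z)"
proof -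
  have "f differentiable (at z within S)" using assms(2,3) by (simp add: differentiable_on_def)
  then show ?thesis using at_within_open[OF assms(3,1)] by simp
qed

lemma Ck_on_cong:
  assumes "open S" "\<And>z. z \<in> S \<Longrightarrow> f z = g z" "Ck_on k S f"
  shows "Ck_on k S g"
  using assms(2,3)
proof (induction k arbitrary: f g)
  case 0
  have "continuous_on S f = continuous_on S g" by (rule continuous_on_cong[OF refl]) (simp add: 0)
  then show ?case using 0 by simp
next
  case (Suc k)
  have "continuous_on S f = continuous_on S g" by (rule continuous_on_cong[OF refl]) (simp add: Suc.prems)
  then have c: "continuous_on S g" using Suc.prems by simp
  have d: "g differentiable_on S"
    unfolding differentiable_on_def
  proof
    fix z assume z: "z \<in> S"
    then have "f differentiable (at z)" using Ck_on_differentiable[OF assms(1) Suc.prems(2)] by blast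
    then obtain f' where "(f has_derivative f') (at z)" by (auto simp: differentiable_def)
    then have "(g has_derivative f') (at z)"
      using has_derivative_transform_within_open[OF _ assms(1) z] Suc.prems(1) by blast
    then show "g differentiable (at z within S)"
      by (auto simp: differentiable_def intro: has_derivative_at_withinI)
  qed
  have "Ck_on k S (pdiff e g)" if "e \<in> Basis" for e
  proof (rule Suc.IH)
    show "pdiff e f z = pdiff e g z" if "z \<in> S" for z
      using pdiff_cong[OF assms(1) that] Suc.prems(1) by blast
    show "Ck_on k S (pdiff e f)" using Suc.prems(2) \<open>e \<in> Basis\<close> by simp
  qed
  then show ?case using c d by simp
qed

lemma Ck_on_const: "Ck_on k S (\<lambda>z. c)"
proof (induction k arbitrary: c)
  case 0 then show ?case by simp
next
  case (Suc k)
  have "pdiff e (\<lambda>z::'a. c) = (\<lambda>z. 0)" for e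
  proof
    fix x :: 'a
    have "((\<lambda>z::'a. c) has_derivative (\<lambda>h. 0)) (at x)" by simp
    then show "pdiff e (\<lambda>z. c) x = 0" by (rule pdiff_has_derivative)
  qed
  then show ?case using Suc.IH[of 0] by (simp add: differentiable_const)
qed

lemma Ck_on_linear:
  assumes "open S" "bounded_linear f"
  shows "Ck_on k S f"
proof -
  show ?thesis
  proof (cases k)
    case 0 then show ?thesis using assms linear_continuous_on by simp
  next
    case (Suc k')
    have "pdiff e f = (\<lambda>z. f e)" for e
      using pdiff_has_derivative[OF bounded_linear_imp_has_derivative[OF assms(2)]] by (simp add: fun_eq_iff)
    then show ?thesis using Suc assms linear_continuous_on[OF assms(2)]
        bounded_linear_imp_differentiable_on[OF assms(2)] by (simp add: Ck_on_const)
  qed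
qed

lemma Ck_on_add:
  assumes "open S" "Ck_on k S f" "Ck_on k S g"
  shows "Ck_on k S (\<lambda>z. f z + g z)"
  using assms(2,3)
proof (induction k arbitrary: f g)
  case 0 then show ?case by (simp add: continuous_on_add)
next
  case (Suc k)
  have "Ck_on k S (pdiff e (\<lambda>z. f z + g z))" if e: "e \<in> Basis" for e
  proof (rule Ck_on_cong[OF assms(1)])
    show "Ck_on k S (\<lambda>z. pdiff e f z + pdiff e g z)" using Suc e by simp
    fix z assume z: "z \<in> S"
    obtain f' where f': "(f has_derivative f') (at z)"
      using Ck_on_differentiable[OF assms(1) Suc.prems(1) z] by (auto simp: differentiable_def)
    obtain g' where g': "(g has_derivative g') (at z)"
      using Ck_on_differentiable[OF assms(1) Suc.prems(2) z] by (auto simp: differentiable_def)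
    show "pdiff e f z + pdiff e g z = pdiff e (\<lambda>z. f z + g z) z"
      using pdiff_has_derivative[OF f'] pdiff_has_derivative[OF g']
        pdiff_has_derivative[OF has_derivative_add[OF f' g']] by simp
  qed
  then show ?case using Suc.prems
    by (auto intro!: continuous_on_add differentiable_on_add)
qed

lemma Ck_on_mult:
  assumes "open S" "Ck_on k S f" "Ck_on k S g"
  shows "Ck_on k S (\<lambda>z. f z * g z)"
  using assms(2,3)
proof (induction k arbitrary: f g)
  case 0 then show ?case by (simp add: continuous_on_mult)
next
  case (Suc k)
  have "Ck_on k S (pdiff e (\<lambda>z. f z * g z))" if e: "e \<in> Basis" for e
  proof (rule Ck_on_cong[OF assms(1)])
    show "Ck_on k S (\<lambda>z. f z * pdiff e g z + pdiff e f z * g z)"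
      using Suc e Ck_on_mono[of k S f] Ck_on_mono[of k S g]
      by (intro Ck_on_add[OF assms(1)] Suc.IH) auto
    fix z assume z: "z \<in> S"
    obtain f' where f': "(f has_derivative f') (at z)"
      using Ck_on_differentiable[OF assms(1) Suc.prems(1) z] by (auto simp: differentiable_def)
    obtain g' where g': "(g has_derivative g') (at z)"
      using Ck_on_differentiable[OF assms(1) Suc.prems(2) z] by (auto simp: differentiable_def)
    show "f z * pdiff e g z + pdiff e f z * g z = pdiff e (\<lambda>z. f z * g z) z"
      using pdiff_has_derivative[OF f'] pdiff_has_derivative[OF g']
        pdiff_has_derivative[OF has_derivative_mult[OF f' g']] by simp
  qed
  then show ?case using Suc.prems
    by (auto intro!: continuous_on_mult differentiable_on_mult)
qed

lemma Ck_on_sum: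
  assumes "open S" "finite I" "\<And>i. i \<in> I \<Longrightarrow> Ck_on k S (f i)"
  shows "Ck_on k S (\<lambda>z. \<Sum>i\<in>I. f i z)"
  using assms(2,3)
proof (induction I rule: finite_induct)
  case empty then show ?case using Ck_on_const[of k S 0] by simp
next
  case (insert x F) then show ?case by (simp add: Ck_on_add[OF assms(1)])
qed

lemma Ck_on_compose:
  assumes "open S" "open U" "\<And>z. z \<in> S \<Longrightarrow> f z \<in> U"
    and D: "\<And>m x. x \<in> U \<Longrightarrow> (D m has_real_derivative D (Suc m) x) (at x)"
    and "Ck_on k S f"
  shows "Ck_on k S (\<lambda>z. D m (f z))"
  using assms(5)
proof (induction k arbitrary: m)
  have cD: "continuous_on U (D m)" for m
    using D by (meson DERIV_continuous continuous_at_imp_continuous_on)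
  {
    case 0
    then show ?case using continuous_on_compose2[OF cD[of m], of S f] assms(3) by auto
  next
    case (Suc k)
    have hd: "((\<lambda>z. D m (f z)) has_derivative (\<lambda>h. f' h * D (Suc m) (f z))) (at z)"
      if "z \<in> S" "(f has_derivative f') (at z)" for z f' m
      using has_derivative_compose[OF that(2) D[OF assms(3)[OF that(1)], THEN has_field_derivative_imp_has_derivative]]
      by (simp add: mult.commute)
    have "Ck_on k S (pdiff e (\<lambda>z. D m (f z)))" if e: "e \<in> Basis" for e
    proof (rule Ck_on_cong[OF assms(1)])
      show "Ck_on k S (\<lambda>z. pdiff e f z * D (Suc m) (f z))"
        using Suc e Ck_on_mono[of k S f]
        by (intro Ck_on_mult[OF assms(1)] Suc.IH) auto
      fix z assume z: "z \<in> S"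
      obtain f' where f': "(f has_derivative f') (at z)"
        using Ck_on_differentiable[OF assms(1) Suc.prems(1) z] by (auto simp: differentiable_def)
      show "pdiff e f z * D (Suc m) (f z) = pdiff e (\<lambda>z. D m (f z)) z"
        using pdiff_has_derivative[OF f'] pdiff_has_derivative[OF hd[OF z f']] by simp
    qed
    moreover have "continuous_on S (\<lambda>z. D m (f z))"
      using continuous_on_compose2[OF cD[of m], of S f] assms(3) Suc.prems by auto
    moreover have "(\<lambda>z. D m (f z)) differentiable_on S"
      unfolding differentiable_on_def
    proof
      fix z assume z: "z \<in> S"
      obtain f' where f': "(f has_derivative f') (at z)"
        using Ck_on_differentiable[OF assms(1) Suc.prems(1) z] by (auto simp: differentiable_def)
      show "(\<lambda>z. D m (f z)) differentiable at z within S"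
        using has_derivative_at_withinI[OF hd[OF z f']] by (auto simp: differentiable_def)
    qed
    ultimately show ?case by simp
  }
qed

definition Pw :: "real \<Rightarrow> nat \<Rightarrow> real \<Rightarrow> real" where
  "Pw p m t = (\<Prod>j<m. (p - real j)) * t powr (p - real m)"

lemma Pw_deriv: "t \<in> {0<..} \<Longrightarrow> (Pw p m has_real_derivative Pw p (Suc m) t) (at t)"
  unfolding Pw_def
  using has_real_derivative_powr[of t "p - real m"]
  by (auto intro!: derivative_eq_intros simp: algebra_simps diff_diff_eq)

lemma Pw_0: "Pw p 0 t = t powr p" by (simp add: Pw_def)

definition Ex :: "nat \<Rightarrow> real \<Rightarrow> real" where
  "Ex m s = (-1)^m * exp (- s)"

lemma Ex_deriv: "(Ex m has_real_derivative Ex (Suc m) s) (at s)"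
  unfolding Ex_def by (auto intro!: derivative_eq_intros)

section \<open>Power series with factorial bounds\<close>

lemma diffs_bound:
  fixes c :: "nat \<Rightarrow> real"
  assumes "\<And>k. \<bar>c k\<bar> \<le> M / fact k"
  shows "\<bar>diffs c k\<bar> \<le> M / fact k"
proof -
  have "\<bar>diffs c k\<bar> = real (Suc k) * \<bar>c (Suc k)\<bar>" by (simp add: diffs_def abs_mult)
  also have "\<dots> \<le> real (Suc k) * (M / fact (Suc k))"
    by (intro mult_left_mono assms) auto
  also have "\<dots> = M / fact k" by (simp add: fact_Suc del: of_nat_Suc)
  finally show ?thesis .
qed

lemma diffs_pow_bound:
  fixes c :: "nat \<Rightarrow> real"
  assumes "\<And>k. \<bar>c k\<bar> \<le> M / fact k"
  shows "\<bar>(diffs ^^ m) c k\<bar> \<le> M / fact k"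
  using assms by (induction m arbitrary: k) (auto intro: diffs_bound)

lemma fact_bound_summable:
  fixes c :: "nat \<Rightarrow> real"
  assumes "\<And>k. \<bar>c k\<bar> \<le> M / fact k"
  shows "summable (\<lambda>k. c k * (y::real) ^ k)"
proof (rule summable_comparison_test)
  show "summable (\<lambda>k. M * (\<bar>y\<bar> ^ k / fact k))"
    using summable_exp[of "\<bar>y\<bar>"] by (intro summable_mult) (simp add: divide_inverse mult.commute)
  show "\<exists>N. \<forall>n\<ge>N. norm (c n * y ^ n) \<le> M * (\<bar>y\<bar> ^ n / fact n)"
  proof (intro exI allI impI)
    fix n :: nat
    have "norm (c n * y ^ n) = \<bar>c n\<bar> * \<bar>y\<bar> ^ n" by (simp add: abs_mult power_abs)
    also have "\<dots> \<le> (M / fact n) * \<bar>y\<bar> ^ n" by (intro mult_right_mono assms) auto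
    finally show "norm (c n * y ^ n) \<le> M * (\<bar>y\<bar> ^ n / fact n)" by simp
  qed
qed

definition PS :: "(nat \<Rightarrow> real) \<Rightarrow> nat \<Rightarrow> real \<Rightarrow> real" where
  "PS c m s = (\<Sum>k. (diffs ^^ m) c k * s ^ k)"

lemma PS_deriv:
  fixes c :: "nat \<Rightarrow> real"
  assumes "\<And>k. \<bar>c k\<bar> \<le> M / fact k"
  shows "(PS c m has_real_derivative PS c (Suc m) s) (at s)"
proof -
  have "\<And>k. \<bar>(diffs ^^ m) c k\<bar> \<le> M / fact k" by (rule diffs_pow_bound) (rule assms)
  then have "summable (\<lambda>k. (diffs ^^ m) c k * y ^ k)" for y by (rule fact_bound_summable)
  then show ?thesis unfolding PS_def
    using termdiffs_strong_converges_everywhere[of "(diffs ^^ m) c" s] by simp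
qed

lemma PS_summable:
  fixes c :: "nat \<Rightarrow> real"
  assumes "\<And>k. \<bar>c k\<bar> \<le> M / fact k"
  shows "summable (\<lambda>k. (diffs ^^ m) c k * s ^ k)"
proof -
  have "\<And>k. \<bar>(diffs ^^ m) c k\<bar> \<le> M / fact k" by (rule diffs_pow_bound) (rule assms)
  then show ?thesis by (rule fact_bound_summable)
qed

lemma times_diffs_sums:
  fixes e :: "nat \<Rightarrow> real"
  assumes "summable (\<lambda>k. diffs e k * z ^ k)"
  shows "(\<lambda>k. real k * e k * z ^ k) sums (z * (\<Sum>k. diffs e k * z ^ k))"
proof -
  have "(\<lambda>k. diffs e k * z ^ k * z) sums ((\<Sum>k. diffs e k * z ^ k) * z)"
    using assms by (intro sums_mult2 summable_sums)
  then have "(\<lambda>k. real (Suc k) * e (Suc k) * z ^ (Suc k)) sums ((\<Sum>k. diffs e k * z ^ k) * z)"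
    by (simp add: diffs_def mult_ac)
  then have "(\<lambda>k. real k * e k * z ^ k) sums ((\<Sum>k. diffs e k * z ^ k) * z)"
    using sums_Suc_iff[of "\<lambda>k. real k * e k * z ^ k"] by simp
  then show ?thesis by (simp add: mult.commute)
qed

section \<open>The Kummer-type function\<close>

lemma aux1: "(x::real) * p * q - 2 * (x * n / d) + x = x * (p * q - 2 * (n / d) + 1)"
  by (simp add: algebra_simps)

lemma kummer_alg: "(v::real) > 0 \<Longrightarrow> (v - a) / v * ((v - a + 1) / (v + 1)) - 2 * ((v - a) / v) + 1 = a * (a + 1) / (v * (v + 1))"
proof -
  assume v: "v > 0"
  have D: "v * (v + 1) > 0" using v by simp
  have e1: "(v - a) / v * ((v - a + 1) / (v + 1)) = (v - a) * (v - a + 1) / (v * (v + 1))" by simp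
  have e2: "2 * ((v - a) / v) = 2 * (v - a) * (v + 1) / (v * (v + 1))" using v by simp
  have e3: "(1::real) = v * (v + 1) / (v * (v + 1))" using v D by auto
  have "(v - a) / v * ((v - a + 1) / (v + 1)) - 2 * ((v - a) / v) + 1 =
     ((v - a) * (v - a + 1) - 2 * (v - a) * (v + 1) + v * (v + 1)) / (v * (v + 1))"
    unfolding e1 e2 by (subst e3) (simp only: diff_divide_distrib add_divide_distrib)
  also have "(v - a) * (v - a + 1) - 2 * (v - a) * (v + 1) + v * (v + 1) = a * (a + 1)"
    by algebra
  finally show ?thesis .
qed

locale kummer =
  fixes a b :: real
  assumes a_pos: "0 < a" and ab: "a < b"
begin

definition dc :: "nat \<Rightarrow> real" where
  "dc k = pochhammer (b - a) k / (pochhammer b k * fact k)"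

lemma b_pos: "0 < b" using a_pos ab by simp

lemma dc_Suc: "dc (Suc k) = dc k * (b - a + k) / ((Suc k) * (b + k))"
  using b_pos by (simp add: dc_def pochhammer_Suc field_simps)

lemma dc_pos: "0 < dc k"
  using a_pos ab b_pos by (simp add: dc_def pochhammer_pos)

lemma dc_bound: "\<bar>dc k\<bar> \<le> 1 / fact k"
proof (induction k)
  case 0 then show ?case by (simp add: dc_def)
next
  case (Suc k)
  have q0: "(b - a + k) / (b + k) \<le> 1" using a_pos b_pos by simp
  have "(b - a + k) / ((Suc k) * (b + k)) = ((b - a + k) / (b + k)) / Suc k"
    by (simp add: divide_divide_eq_left mult.commute)
  also have "\<dots> \<le> 1 / Suc k" using q0 by (intro divide_right_mono) auto
  finally have q: "(b - a + k) / ((Suc k) * (b + k)) \<le> 1 / Suc k" .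
  have "\<bar>dc (Suc k)\<bar> = dc (Suc k)" using dc_pos[of "Suc k"] by simp
  also have "\<dots> = dc k * ((b - a + k) / ((Suc k) * (b + k)))"
    unfolding dc_Suc by (simp only: times_divide_eq_right)
  also have "\<dots> \<le> (1 / fact k) * (1 / Suc k)"
    using Suc dc_pos[of k] q a_pos ab by (intro mult_mono) auto
  also have "\<dots> = 1 / fact (Suc k)" by simp
  finally show ?case .
qed

abbreviation "G \<equiv> PS dc"

lemma G_deriv: "(G m has_real_derivative G (Suc m) s) (at s)"
  by (rule PS_deriv[OF dc_bound])

lemma diffs_dc: "diffs dc k = dc k * (b - a + k) / (b + k)"
proof -
  have "diffs dc k = real (Suc k) * (dc k * (b - a + k) / (real (Suc k) * (b + k)))"
    unfolding diffs_def dc_Suc by simp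
  also have "\<dots> = dc k * (b - a + k) / (b + k)"
    by (metis (no_types, lifting) mult.commute nonzero_mult_divide_mult_cancel_left of_nat_Suc
        of_nat_neq_0 times_divide_eq_right)
  finally show ?thesis .
qed

lemma diffs2_dc: "diffs (diffs dc) k = dc k * ((b - a + k) / (b + k)) * ((b - a + k + 1) / (b + k + 1))"
proof -
  have "diffs (diffs dc) k = real (Suc k) * diffs dc (Suc k)" by (simp add: diffs_def)
  also have "\<dots> = real (Suc k) * dc (Suc k) * ((b - a + Suc k) / (b + Suc k))"
    unfolding diffs_dc[of "Suc k"] by simp
  also have "real (Suc k) * dc (Suc k) = diffs dc k" by (simp add: diffs_def)
  also have "diffs dc k = dc k * ((b - a + k) / (b + k))" unfolding diffs_dc by simp
  finally show ?thesis by (simp add: algebra_simps)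
qed

lemma G_ode: "z * G 2 z + (b - z) * G 1 z - (b - a) * G 0 z = 0"
proof -
  have s0: "summable (\<lambda>k. dc k * z ^ k)" using PS_summable[OF dc_bound, of 0] by simp
  have s1: "summable (\<lambda>k. diffs dc k * z ^ k)" using PS_summable[OF dc_bound, of 1] by simp
  have s2: "summable (\<lambda>k. diffs (diffs dc) k * z ^ k)"
    using PS_summable[OF dc_bound, of 2] by (simp add: numeral_2_eq_2)
  have e2: "(\<lambda>k. real k * diffs dc k * z ^ k) sums (z * G 2 z)"
    using times_diffs_sums[OF s2] by (simp add: PS_def numeral_2_eq_2)
  have e1: "(\<lambda>k. real k * dc k * z ^ k) sums (z * G 1 z)"
    using times_diffs_sums[OF s1] by (simp add: PS_def)
  have f1: "(\<lambda>k. b * (diffs dc k * z ^ k)) sums (b * G 1 z)"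
    using sums_mult[OF summable_sums[OF s1], of b] by (simp add: PS_def)
  have f0: "(\<lambda>k. (b - a) * (dc k * z ^ k)) sums ((b - a) * G 0 z)"
    using sums_mult[OF summable_sums[OF s0], of "b - a"] by (simp add: PS_def)
  have "(\<lambda>k. real k * diffs dc k * z ^ k + b * (diffs dc k * z ^ k) - real k * dc k * z ^ k
      - (b - a) * (dc k * z ^ k)) sums (z * G 2 z + b * G 1 z - z * G 1 z - (b - a) * G 0 z)"
    by (intro sums_diff sums_add e2 e1 f1 f0)
  moreover have "real k * diffs dc k * z ^ k + b * (diffs dc k * z ^ k) - real k * dc k * z ^ k
      - (b - a) * (dc k * z ^ k) = 0" for k
  proof -
    have bk: "b + real k > 0" using b_pos by simp
    have "real k * diffs dc k + b * diffs dc k = (b + k) * diffs dc k"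
      by (simp add: algebra_simps)
    also have "\<dots> = (b + k) * (dc k * (b - a + k) / (b + k))"
      unfolding diffs_dc by simp
    also have "\<dots> = (b - a + k) * dc k" using bk by simp
    finally have e: "real k * diffs dc k + b * diffs dc k = (b - a + k) * dc k" .
    have "real k * diffs dc k * z ^ k + b * (diffs dc k * z ^ k) - real k * dc k * z ^ k
      - (b - a) * (dc k * z ^ k) = (real k * diffs dc k + b * diffs dc k - (b - a + k) * dc k) * z ^ k"
      by (simp add: algebra_simps)
    then show ?thesis using e by simp
  qed
  ultimately have h: "(\<lambda>k. 0::real) sums (z * G 2 z + b * G 1 z - z * G 1 z - (b - a) * G 0 z)"
    by simp
  have "z * G 2 z + b * G 1 z - z * G 1 z - (b - a) * G 0 z = 0"
    using sums_unique2[OF h sums_zero] .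
  then show ?thesis by (simp add: algebra_simps)
qed

lemma G_pos: "0 \<le> z \<Longrightarrow> 1 \<le> G 0 z"
proof -
  assume z: "0 \<le> z"
  have s0: "summable (\<lambda>k. dc k * z ^ k)" using PS_summable[OF dc_bound, of 0] by simp
  have "sum (\<lambda>k. dc k * z ^ k) {0} \<le> (\<Sum>k. dc k * z ^ k)"
    using s0 z dc_pos by (intro sum_le_suminf) (auto intro!: mult_nonneg_nonneg simp: less_imp_le)
  then show ?thesis by (simp add: PS_def dc_def)
qed

lemma G_0: "G 0 0 = 1"
proof -
  have "G 0 0 = dc 0" unfolding PS_def by simp
  then show ?thesis by (simp add: dc_def)
qed

lemma H_nonneg: "0 \<le> z \<Longrightarrow> 0 \<le> G 2 z - 2 * G 1 z + G 0 z"
proof -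
  assume z: "0 \<le> z"
  have s0: "summable (\<lambda>k. dc k * z ^ k)" using PS_summable[OF dc_bound, of 0] by simp
  have s1: "summable (\<lambda>k. diffs dc k * z ^ k)" using PS_summable[OF dc_bound, of 1] by simp
  have s2: "summable (\<lambda>k. diffs (diffs dc) k * z ^ k)"
    using PS_summable[OF dc_bound, of 2] by (simp add: numeral_2_eq_2)
  have sm: "(\<lambda>k. diffs (diffs dc) k * z ^ k - 2 * (diffs dc k * z ^ k) + dc k * z ^ k) sums
      (G 2 z - 2 * G 1 z + G 0 z)"
    using s0 s1 s2 by (auto intro!: sums_add sums_diff sums_mult summable_sums simp: PS_def numeral_2_eq_2)
  have nn: "0 \<le> diffs (diffs dc) k * z ^ k - 2 * (diffs dc k * z ^ k) + dc k * z ^ k" for k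
  proof -
    have r: "b - a + real k = (b + real k) - a" "b - a + real k + 1 = (b + real k) - a + 1" by simp_all
    have "diffs (diffs dc) k - 2 * diffs dc k + dc k
       = dc k * ((b + k - a) / (b + k) * ((b + k - a + 1) / (b + k + 1)) - 2 * ((b + k - a) / (b + k)) + 1)"
      unfolding diffs2_dc diffs_dc r by (rule aux1)
    also have "\<dots> = dc k * (a * (a + 1) / ((b + k) * (b + k + 1)))"
    proof -
      have bk: "b + real k > 0" using b_pos by simp
      show ?thesis unfolding kummer_alg[OF bk] ..
    qed
    also have "\<dots> \<ge> 0" using dc_pos[of k] a_pos b_pos by (intro mult_nonneg_nonneg divide_nonneg_pos) auto
    finally have "0 \<le> diffs (diffs dc) k - 2 * diffs dc k + dc k" .
    then have "0 \<le> (diffs (diffs dc) k - 2 * diffs dc k + dc k) * z ^ k" using z by simp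
    then show ?thesis by (simp add: algebra_simps)
  qed
  show ?thesis by (rule sums_le[OF nn sums_zero sm])
qed

end

context kummer
begin

definition F :: "real \<Rightarrow> real" where "F s = exp (- s) * G 0 s"
definition F1 :: "real \<Rightarrow> real" where "F1 s = exp (- s) * (G 1 s - G 0 s)"
definition F2 :: "real \<Rightarrow> real" where "F2 s = exp (- s) * (G 2 s - 2 * G 1 s + G 0 s)"

lemma G_deriv': "(G m has_real_derivative G (Suc m) s) (at s within X)"
  using G_deriv has_field_derivative_at_within by blast

lemma F_deriv: "(F has_real_derivative F1 s) (at s)"
  unfolding F_def F1_def
  by (rule derivative_eq_intros G_deriv refl | simp)+ (simp add: algebra_simps)

lemma F1_deriv: "(F1 has_real_derivative F2 s) (at s)"
  unfolding F1_def F2_def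
  by (rule derivative_eq_intros G_deriv refl | simp add: numeral_2_eq_2)+ (simp add: algebra_simps numeral_2_eq_2)

lemma F_ode: "s * F2 s + (b + s) * F1 s + a * F s = 0"
proof -
  have "s * F2 s + (b + s) * F1 s + a * F s
      = exp (- s) * (s * G 2 s + (b - s) * G 1 s - (b - a) * G 0 s)"
    unfolding F_def F1_def F2_def by (simp add: algebra_simps)
  then show ?thesis using G_ode[of s] by simp
qed

lemma F_pos: "0 \<le> s \<Longrightarrow> 0 < F s"
  using G_pos[of s] unfolding F_def by simp

lemma F2_nonneg: "0 \<le> s \<Longrightarrow> 0 \<le> F2 s"
  using H_nonneg[of s] unfolding F2_def by simp

lemma F_0: "F 0 = 1" using G_0 unfolding F_def by simp

lemma F_bound:
  assumes s: "0 \<le> s"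
  shows "F s \<le> b powr a * (b + s) powr (- a)"
proof -
  define \<phi> where "\<phi> y = F y * (b + y) powr a" for y
  have "\<phi> 0 \<ge> \<phi> s"
  proof (rule DERIV_nonpos_imp_nonincreasing[OF s])
    fix y assume y: "0 \<le> y" "y \<le> s"
    have by0: "0 < b + y" using b_pos y by simp
    have d: "(\<phi> has_real_derivative F1 y * (b + y) powr a + F y * (a * (b + y) powr (a - 1))) (at y)"
      unfolding \<phi>_def using by0
      by (auto intro!: derivative_eq_intros F_deriv)
    have "F1 y * (b + y) powr a + F y * (a * (b + y) powr (a - 1))
        = (b + y) powr (a - 1) * ((b + y) * F1 y + a * F y)"
    proof -
      have p: "(b + y) powr (a - 1) = (b + y) powr a / (b + y)" using by0 by (simp add: powr_diff)
      show ?thesis unfolding p using by0 by (simp add: field_simps)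
    qed
    also have "(b + y) * F1 y + a * F y = - (y * F2 y)" using F_ode[of y] by (simp add: algebra_simps)
    also have "(b + y) powr (a - 1) * - (y * F2 y) \<le> 0"
      using F2_nonneg[of y] y by (simp add: mult_nonneg_nonneg)
    finally show "\<exists>D. (\<phi> has_real_derivative D) (at y) \<and> D \<le> 0" using d by blast
  qed
  then have "F s * (b + s) powr a \<le> b powr a" unfolding \<phi>_def using F_0 by simp
  moreover have "(b + s) powr a > 0" using b_pos s by simp
  ultimately have "F s \<le> b powr a / (b + s) powr a" by (simp add: field_simps)
  then show ?thesis by (simp add: powr_minus divide_inverse)
qed

end

lemma pdiff_line:
  assumes "f differentiable (at z)"
    and "((\<lambda>h. f (z + h *\<^sub>R e)) has_real_derivative D) (at 0)"
  shows "pdiff e f z = D"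
proof -
  obtain f' where f': "(f has_derivative f') (at z)" using assms(1) by (auto simp: differentiable_def)
  have lin: "((\<lambda>h. z + h *\<^sub>R e) has_derivative (\<lambda>h. h *\<^sub>R e)) (at 0)"
    by (auto intro!: derivative_eq_intros)
  have f'': "(f has_derivative f') (at ((\<lambda>h. z + h *\<^sub>R e) 0))" using f' by simp
  have "((\<lambda>h. f (z + h *\<^sub>R e)) has_derivative (\<lambda>h. f' (h *\<^sub>R e))) (at 0)"
    using has_derivative_compose[OF lin f''] by simp
  moreover have "(\<lambda>h. f' (h *\<^sub>R e)) = (\<lambda>h. f' e * h)"
    using linear_cmul[OF has_derivative_linear[OF f']] by (simp add: fun_eq_iff)
  ultimately have "((\<lambda>h. f (z + h *\<^sub>R e)) has_real_derivative f' e) (at 0)"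
    by (simp add: has_field_derivative_def)
  then have "D = f' e" using assms(2) DERIV_unique by blast
  then show ?thesis using pdiff_has_derivative[OF f'] by simp
qed

lemma nsq:
  fixes x i :: "'x::euclidean_space"
  assumes "norm i = 1"
  shows "norm (x + h *\<^sub>R i) ^ 2 = norm x ^ 2 + 2 * h * (x \<bullet> i) + h ^ 2"
proof -
  have "i \<bullet> i = 1" using assms by (simp add: power2_norm_eq_inner[symmetric])
  have "norm (x + h *\<^sub>R i) ^ 2 = (x + h *\<^sub>R i) \<bullet> (x + h *\<^sub>R i)"
    by (rule power2_norm_eq_inner)
  also have "\<dots> = x \<bullet> x + 2 * h * (x \<bullet> i) + h ^ 2 * (i \<bullet> i)"
    by (simp add: inner_add_left inner_add_right inner_commute power2_eq_square algebra_simps)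
  also have "x \<bullet> x = norm x ^ 2" by (simp add: power2_norm_eq_inner)
  finally show ?thesis using \<open>i \<bullet> i = 1\<close> by simp
qed

context kummer
begin

definition uu :: "'x::euclidean_space \<times> real \<Rightarrow> real" where
  "uu z = snd z powr (- a) * F (norm (fst z) ^ 2 / (4 * snd z))"

lemma open_S: "open (UNIV \<times> {0<..} :: ('x::euclidean_space \<times> real) set)"
  by (intro open_Times) auto

lemma uu_smooth: "Ck_on k (UNIV \<times> {0<..}) (uu :: 'x::euclidean_space \<times> real \<Rightarrow> real)"
proof -
  let ?S = "UNIV \<times> {0<..} :: ('x \<times> real) set"
  have oS: "open ?S" by (rule open_S)
  have cs: "Ck_on k ?S snd" by (rule Ck_on_linear[OF oS bounded_linear_snd])
  have ci: "Ck_on k ?S (\<lambda>z. fst z \<bullet> i)" for i :: 'x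
    by (rule Ck_on_linear[OF oS bounded_linear_compose[OF bounded_linear_inner_left bounded_linear_fst]])
  have cp: "Ck_on k ?S (\<lambda>z. Pw p 0 (snd z))" for p
    by (rule Ck_on_compose[OF oS, of "{0<..}" _ "Pw p", OF _ _ _ cs]) (auto intro: Pw_deriv)
  define \<rho> where "\<rho> z = (\<Sum>i\<in>Basis. (fst z \<bullet> i) * (fst z \<bullet> i)) * (Pw (-1) 0 (snd z) * (1/4))"
    for z :: "'x \<times> real"
  have cr: "Ck_on k ?S \<rho>"
    unfolding \<rho>_def
    by (intro Ck_on_mult[OF oS] Ck_on_sum[OF oS] ci cp Ck_on_const) auto
  have ce: "Ck_on k ?S (\<lambda>z. Ex 0 (\<rho> z))"
    by (rule Ck_on_compose[OF oS, of UNIV _ Ex, OF _ _ _ cr]) (auto intro: Ex_deriv)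
  have cg: "Ck_on k ?S (\<lambda>z. G 0 (\<rho> z))"
    by (rule Ck_on_compose[OF oS, of UNIV _ G, OF _ _ _ cr]) (auto intro: G_deriv)
  have cv: "Ck_on k ?S (\<lambda>z. Pw (-a) 0 (snd z) * (Ex 0 (\<rho> z) * G 0 (\<rho> z)))"
    by (intro Ck_on_mult[OF oS] cp ce cg)
  show ?thesis
  proof (rule Ck_on_cong[OF oS _ cv])
    fix z :: "'x \<times> real" assume z: "z \<in> ?S"
    obtain x t where zt: "z = (x, t)" and t: "t > 0" using z by auto
    have "(\<Sum>i\<in>Basis. (x \<bullet> i) * (x \<bullet> i)) = norm x ^ 2"
      by (simp add: power2_norm_eq_inner euclidean_inner[of x x])
    moreover have "Pw (-1) 0 t = inverse t" using t by (simp add: Pw_0 powr_minus)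
    ultimately have "\<rho> z = norm x ^ 2 / (4 * t)" unfolding \<rho>_def zt by (simp add: field_simps)
    then show "Pw (-a) 0 (snd z) * (Ex 0 (\<rho> z) * G 0 (\<rho> z)) = uu z"
      unfolding uu_def zt by (simp add: Pw_0 Ex_def F_def)
  qed
qed


definition Ux :: "'x::euclidean_space \<Rightarrow> 'x \<times> real \<Rightarrow> real" where
  "Ux i z = snd z powr (- a) * F1 (norm (fst z) ^ 2 / (4 * snd z)) * ((fst z \<bullet> i) / (2 * snd z))"

lemma uu_diff: "z \<in> UNIV \<times> {0<..} \<Longrightarrow> uu differentiable (at z)"
  using Ck_on_differentiable[OF open_S uu_smooth[of "Suc 0"]] by blast

lemma pdiff_x:
  fixes x i :: "'x::euclidean_space"
  assumes t: "t > 0" and i: "i \<in> Basis"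
  shows "pdiff (i, 0) uu (x, t) = Ux i (x, t)"
proof (rule pdiff_line[OF uu_diff])
  show "(x, t) \<in> UNIV \<times> {0<..}" using t by simp
  have ni: "norm i = 1" using i by simp
  let ?q = "\<lambda>h. (norm x ^ 2 + 2 * h * (x \<bullet> i) + h ^ 2) / (4 * t)"
  have eq: "(\<lambda>h. uu ((x, t) + h *\<^sub>R (i, 0))) = (\<lambda>h. t powr (- a) * F (?q h))"
    by (simp add: fun_eq_iff uu_def nsq[OF ni])
  have dq: "(?q has_real_derivative (2 * (x \<bullet> i)) / (4 * t)) (at 0)"
    using t by (auto intro!: derivative_eq_intros)
  have dF: "(F has_real_derivative F1 (norm x ^ 2 / (4 * t))) (at (?q 0))"
    using F_deriv by simp
  have "((\<lambda>h. t powr (- a) * F (?q h)) has_real_derivative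
      t powr (- a) * (F1 (norm x ^ 2 / (4 * t)) * ((2 * (x \<bullet> i)) / (4 * t)))) (at 0)"
    by (rule DERIV_cmult[OF DERIV_chain2[OF dF dq]])
  moreover have "t powr (- a) * (F1 (norm x ^ 2 / (4 * t)) * ((2 * (x \<bullet> i)) / (4 * t))) = Ux i (x, t)"
    unfolding Ux_def by simp
  ultimately show "((\<lambda>h. uu ((x, t) + h *\<^sub>R (i, 0))) has_real_derivative Ux i (x, t)) (at 0)"
    unfolding eq by simp
qed

lemma Ux_diff:
  assumes i: "i \<in> Basis" and z: "z \<in> UNIV \<times> {0<..}"
  shows "(Ux i :: 'x::euclidean_space \<times> real \<Rightarrow> real) differentiable (at z)"
proof -
  have "Ck_on (Suc 0) (UNIV \<times> {0<..}) (pdiff (i, 0) (uu :: 'x \<times> real \<Rightarrow> real))"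
  proof -
    have iB: "(i, 0) \<in> (Basis :: ('x \<times> real) set)" using i by (simp add: Basis_prod_def)
    have "Ck_on (Suc (Suc 0)) (UNIV \<times> {0<..}) (uu :: 'x \<times> real \<Rightarrow> real)" by (rule uu_smooth)
    then show ?thesis unfolding Ck_on.simps(2)[of "Suc 0"] using iB by blast
  qed
  then have "Ck_on (Suc 0) (UNIV \<times> {0<..}) (Ux i :: 'x \<times> real \<Rightarrow> real)"
    by (rule Ck_on_cong[OF open_S, rotated]) (auto simp: pdiff_x i)
  then show ?thesis using Ck_on_differentiable[OF open_S _ z] by blast
qed

lemma pdiff_xx:
  fixes x i :: "'x::euclidean_space"
  assumes t: "t > 0" and i: "i \<in> Basis"
  shows "pdiff (i, 0) (pdiff (i, 0) uu) (x, t) =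
    t powr (- a) * (F2 (norm x ^ 2 / (4 * t)) * ((2 * (x \<bullet> i)) / (4 * t)) * ((x \<bullet> i) / (2 * t))
       + F1 (norm x ^ 2 / (4 * t)) * (1 / (2 * t)))"
proof -
  have "pdiff (i, 0) (pdiff (i, 0) uu) (x, t) = pdiff (i, 0) (Ux i) (x, t)"
    by (rule pdiff_cong[OF open_S]) (use t i pdiff_x in auto)
  also have "\<dots> = t powr (- a) * (F2 (norm x ^ 2 / (4 * t)) * ((2 * (x \<bullet> i)) / (4 * t)) * ((x \<bullet> i) / (2 * t))
       + F1 (norm x ^ 2 / (4 * t)) * (1 / (2 * t)))"
  proof (rule pdiff_line[OF Ux_diff[OF i]])
    show "(x, t) \<in> UNIV \<times> {0<..}" using t by simp
    have ni: "norm i = 1" using i by simp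
    have ii: "i \<bullet> i = 1" using i by simp
    let ?q = "\<lambda>h. (norm x ^ 2 + 2 * h * (x \<bullet> i) + h ^ 2) / (4 * t)"
    have eq: "(\<lambda>h. Ux i ((x, t) + h *\<^sub>R (i, 0))) = (\<lambda>h. t powr (- a) * (F1 (?q h) * ((x \<bullet> i + h) / (2 * t))))"
      by (simp add: fun_eq_iff Ux_def nsq[OF ni] inner_add_left ii)
    have dq: "(?q has_real_derivative (2 * (x \<bullet> i)) / (4 * t)) (at 0)"
      using t by (auto intro!: derivative_eq_intros)
    have dF: "(F1 has_real_derivative F2 (norm x ^ 2 / (4 * t))) (at (?q 0))"
      using F1_deriv by simp
    have dl: "((\<lambda>h. (x \<bullet> i + h) / (2 * t)) has_real_derivative 1 / (2 * t)) (at 0)"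
      using t by (auto intro!: derivative_eq_intros)
    have "((\<lambda>h. F1 (?q h) * ((x \<bullet> i + h) / (2 * t))) has_real_derivative
       F2 (norm x ^ 2 / (4 * t)) * ((2 * (x \<bullet> i)) / (4 * t)) * ((x \<bullet> i + 0) / (2 * t))
       + F1 (?q 0) * (1 / (2 * t))) (at 0)"
      by (rule DERIV_cong[OF DERIV_mult[OF DERIV_chain2[OF dF dq] dl]]) (simp add: algebra_simps)
    then have "((\<lambda>h. t powr (- a) * (F1 (?q h) * ((x \<bullet> i + h) / (2 * t)))) has_real_derivative
       t powr (- a) * (F2 (norm x ^ 2 / (4 * t)) * ((2 * (x \<bullet> i)) / (4 * t)) * ((x \<bullet> i) / (2 * t))
       + F1 (norm x ^ 2 / (4 * t)) * (1 / (2 * t)))) (at 0)"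
      using DERIV_cmult by fastforce
    then show "((\<lambda>h. Ux i ((x, t) + h *\<^sub>R (i, 0))) has_real_derivative
       t powr (- a) * (F2 (norm x ^ 2 / (4 * t)) * ((2 * (x \<bullet> i)) / (4 * t)) * ((x \<bullet> i) / (2 * t))
       + F1 (norm x ^ 2 / (4 * t)) * (1 / (2 * t)))) (at 0)"
      unfolding eq .
  qed
  finally show ?thesis .
qed

lemma pdiff_t:
  fixes x :: "'x::euclidean_space"
  assumes t: "t > 0"
  shows "pdiff (0, 1) uu (x, t) =
    - a * t powr (- a - 1) * F (norm x ^ 2 / (4 * t))
    + t powr (- a) * (F1 (norm x ^ 2 / (4 * t)) * (- (norm x ^ 2 * 4) / (4 * t) ^ 2))"
proof (rule pdiff_line[OF uu_diff])
  show "(x, t) \<in> UNIV \<times> {0<..}" using t by simp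
  let ?q = "\<lambda>h. norm x ^ 2 / (4 * (t + h))"
  have eq: "(\<lambda>h. uu ((x, t) + h *\<^sub>R (0, 1))) = (\<lambda>h. (t + h) powr (- a) * F (?q h))"
    by (simp add: fun_eq_iff uu_def)
  have dq: "(?q has_real_derivative - (norm x ^ 2 * 4) / (4 * t) ^ 2) (at 0)"
    using t by (auto intro!: derivative_eq_intros simp: power2_eq_square)
  have dF: "(F has_real_derivative F1 (norm x ^ 2 / (4 * t))) (at (?q 0))"
    using F_deriv by simp
  have dp: "((\<lambda>h. (t + h) powr (- a)) has_real_derivative - a * t powr (- a - 1)) (at 0)"
    using t by (auto intro!: derivative_eq_intros)
  have "((\<lambda>h. (t + h) powr (- a) * F (?q h)) has_real_derivative
     - a * t powr (- a - 1) * F (?q 0) + (t + 0) powr (- a) * (F1 (norm x ^ 2 / (4 * t)) * (- (norm x ^ 2 * 4) / (4 * t) ^ 2))) (at 0)"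
    by (rule DERIV_cong[OF DERIV_mult[OF dp DERIV_chain2[OF dF dq]]]) (simp add: algebra_simps)
  then show "((\<lambda>h. uu ((x, t) + h *\<^sub>R (0, 1))) has_real_derivative
    - a * t powr (- a - 1) * F (norm x ^ 2 / (4 * t))
    + t powr (- a) * (F1 (norm x ^ 2 / (4 * t)) * (- (norm x ^ 2 * 4) / (4 * t) ^ 2))) (at 0)"
    unfolding eq by simp
qed

lemma uu_heat:
  fixes x :: "'x::euclidean_space"
  assumes t: "t > 0" and bdim: "b = DIM('x) / 2"
  shows "pdiff (0, 1) uu (x, t) = (\<Sum>i\<in>Basis. pdiff (i, 0) (pdiff (i, 0) uu) (x, t))"
proof -
  define r where "r = norm x ^ 2 / (4 * t)"
  have "(\<Sum>i\<in>Basis. pdiff (i, 0) (pdiff (i, 0) uu) (x, t))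
     = (\<Sum>i\<in>Basis. t powr (- a) * (F2 r * ((x \<bullet> i) * (x \<bullet> i)) / (4 * t * t) + F1 r / (2 * t)))"
    using t by (intro sum.cong refl) (simp add: pdiff_xx r_def field_simps)
  also have "\<dots> = t powr (- a) * (F2 r * (\<Sum>i\<in>Basis. (x \<bullet> i) * (x \<bullet> i)) / (4 * t * t)
       + DIM('x) * F1 r / (2 * t))"
  proof -
    have s1: "(\<Sum>i\<in>Basis. F2 r * ((x \<bullet> i) * (x \<bullet> i)) / (4 * t * t))
        = F2 r * (\<Sum>i\<in>Basis. (x \<bullet> i) * (x \<bullet> i)) / (4 * t * t)"
      by (simp add: sum_divide_distrib sum_distrib_left)
    have "(\<Sum>i\<in>Basis. t powr (- a) * (F2 r * ((x \<bullet> i) * (x \<bullet> i)) / (4 * t * t) + F1 r / (2 * t)))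
       = t powr (- a) * (\<Sum>i\<in>Basis. (F2 r * ((x \<bullet> i) * (x \<bullet> i)) / (4 * t * t) + F1 r / (2 * t)))"
      by (simp add: sum_distrib_left)
    also have "(\<Sum>i\<in>Basis. (F2 r * ((x \<bullet> i) * (x \<bullet> i)) / (4 * t * t) + F1 r / (2 * t)))
       = F2 r * (\<Sum>i\<in>Basis. (x \<bullet> i) * (x \<bullet> i)) / (4 * t * t) + DIM('x) * F1 r / (2 * t)"
      unfolding sum.distrib s1 by simp
    finally show ?thesis .
  qed
  also have "(\<Sum>i\<in>Basis. (x \<bullet> i) * (x \<bullet> i)) = norm x ^ 2"
    by (simp add: power2_norm_eq_inner euclidean_inner[of x x])
  also have "norm x ^ 2 = r * (4 * t)" using t by (simp add: r_def)
  finally have rhs: "(\<Sum>i\<in>Basis. pdiff (i, 0) (pdiff (i, 0) uu) (x, t))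
      = t powr (- a) * ((r * F2 r + b * F1 r) / t)"
  proof -
    have dimb: "real DIM('x) = 2 * b" using bdim by simp
    assume "(\<Sum>i\<in>Basis. pdiff (i, 0) (pdiff (i, 0) uu) (x, t)) =
      t powr - a * (F2 r * (r * (4 * t)) / (4 * t * t) + real DIM('x) * F1 r / (2 * t))"
    then show ?thesis unfolding dimb using t by (simp add: field_simps)
  qed
  have p1: "t powr (- a - 1) = t powr (- a) / t" using t by (simp add: powr_diff)
  have lhs: "pdiff (0, 1) uu (x, t) = t powr (- a) * ((- a * F r - r * F1 r) / t)"
    unfolding pdiff_t[OF t] p1 r_def[symmetric] using t
    by (simp add: r_def field_simps power2_eq_square)
  have "(b + r) * F1 r = b * F1 r + r * F1 r" by (simp add: distrib_right)
  then have "- a * F r - r * F1 r = r * F2 r + b * F1 r" using F_ode[of r] by linarith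
  then show ?thesis unfolding lhs rhs by simp
qed

end

lemma tail_finite:
  fixes q :: real assumes q: "q > 1/2"
  shows "(\<integral>\<^sup>+ s. ennreal (indicator {1..} s * s powr (- 2 * q)) \<partial>lborel) < \<infinity>"
proof -
  have "((\<lambda>s. s powr (- 2 * q)) has_integral - (1 powr (- 2 * q + 1)) / (- 2 * q + 1)) {1..}"
    using q by (intro has_integral_powr_to_inf) auto
  then have "(\<integral>\<^sup>+ s. ennreal (indicator {1..} s * s powr (- 2 * q)) \<partial>lborel)
       = ennreal (- (1 powr (- 2 * q + 1)) / (- 2 * q + 1))"
    by (intro nn_integral_has_integral_lebesgue) auto
  then show ?thesis by simp
qed

lemma powr_int_finite:
  fixes q :: real assumes q: "q > 1/2"
  shows "(\<integral>\<^sup>+ s. ennreal ((1 + s\<^sup>2) powr (- q)) \<partial>lborel) < \<infinity>"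
proof -
  define w where "w s = (indicator {-1..1} s :: real)" for s :: real
  have wm[measurable]: "w \<in> borel_measurable borel" unfolding w_def by measurable
  define h where "h s = indicator {1..} s * s powr (- 2 * q)" for s :: real
  have hm[measurable]: "h \<in> borel_measurable borel" unfolding h_def by measurable
  have hnn: "0 \<le> h s" for s unfolding h_def by (simp add: indicator_def)
  have bound: "(1 + s\<^sup>2) powr (- q) \<le> w s + h s + h (- s)" for s :: real
  proof -
    consider "\<bar>s\<bar> \<le> 1" | "s > 1" | "s < -1" by linarith
    then show ?thesis
    proof cases
      case 1
      have "(1 + s\<^sup>2) powr (- q) \<le> 1 powr (- q)"
        using q by (intro powr_mono2') auto
      moreover have "w s = 1" using 1 by (auto simp: w_def indicator_def abs_le_iff)
      ultimately show ?thesis using hnn[of s] hnn[of "-s"] by simp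
    next
      case 2
      have "(1 + s\<^sup>2) powr (- q) \<le> (s\<^sup>2) powr (- q)"
        using q 2 by (intro powr_mono2') auto
      also have "(s\<^sup>2) powr (- q) = (s powr 2) powr (- q)"
        using 2 by simp
      also have "\<dots> = s powr (- 2 * q)" by (simp add: powr_powr)
      also have "\<dots> = h s" using 2 by (simp add: h_def)
      finally show ?thesis using hnn[of "-s"] by (simp add: indicator_def w_def)
    next
      case 3
      have "(1 + s\<^sup>2) powr (- q) \<le> ((- s)\<^sup>2) powr (- q)"
        using q 3 by (intro powr_mono2') auto
      also have "((- s)\<^sup>2) powr (- q) = ((- s) powr 2) powr (- q)"
        using 3 by simp
      also have "\<dots> = (- s) powr (- 2 * q)" by (simp add: powr_powr)
      also have "\<dots> = h (- s)" using 3 by (simp add: h_def)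
      finally show ?thesis using hnn[of s] by (simp add: indicator_def w_def)
    qed
  qed
  have "(\<integral>\<^sup>+ s. ennreal ((1 + s\<^sup>2) powr (- q)) \<partial>lborel)
      \<le> (\<integral>\<^sup>+ s. ennreal (w s) + ennreal (h s) + ennreal (h (- s)) \<partial>lborel)"
  proof (intro nn_integral_mono)
    fix x :: real
    have wnn: "0 \<le> w x" by (simp add: w_def)
    have "ennreal ((1 + x\<^sup>2) powr (- q)) \<le> ennreal (w x + h x + h (- x))"
      by (rule ennreal_leI) (rule bound)
    also have "\<dots> = ennreal (w x) + ennreal (h x) + ennreal (h (- x))"
      using wnn hnn[of x] hnn[of "-x"] by (simp add: ennreal_plus)
    finally show "ennreal ((1 + x\<^sup>2) powr (- q)) \<le> ennreal (w x) + ennreal (h x) + ennreal (h (- x))" .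
  qed
  also have "\<dots> = (\<integral>\<^sup>+ s. ennreal (w s) \<partial>lborel) + (\<integral>\<^sup>+ s. ennreal (h s) \<partial>lborel)
      + (\<integral>\<^sup>+ s. ennreal (h (- s)) \<partial>lborel)"
  proof -
    have e1: "(\<integral>\<^sup>+ s. ennreal (w s) + ennreal (h s) + ennreal (h (- s)) \<partial>lborel)
      = (\<integral>\<^sup>+ s. ennreal (w s) + ennreal (h s) \<partial>lborel) + (\<integral>\<^sup>+ s. ennreal (h (- s)) \<partial>lborel)"
      by (rule nn_integral_add) auto
    have e2: "(\<integral>\<^sup>+ s. ennreal (w s) + ennreal (h s) \<partial>lborel)
      = (\<integral>\<^sup>+ s. ennreal (w s) \<partial>lborel) + (\<integral>\<^sup>+ s. ennreal (h s) \<partial>lborel)"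
      using nn_integral_add[of "\<lambda>s. ennreal (w s)" lborel "\<lambda>s. ennreal (h s)"] by simp
    show ?thesis unfolding e1 e2 ..
  qed
  also have "(\<integral>\<^sup>+ s. ennreal (h (- s)) \<partial>lborel) = (\<integral>\<^sup>+ s. ennreal (h s) \<partial>lborel)"
    using nn_integral_real_affine[of "\<lambda>s. ennreal (h s)" "-1" 0] by simp
  also have "(\<integral>\<^sup>+ s. ennreal (w s) \<partial>lborel) = 2"
    by (simp add: w_def ennreal_indicator)
  finally have le: "(\<integral>\<^sup>+ s. ennreal ((1 + s\<^sup>2) powr (- q)) \<partial>lborel)
     \<le> 2 + (\<integral>\<^sup>+ s. ennreal (h s) \<partial>lborel) + (\<integral>\<^sup>+ s. ennreal (h s) \<partial>lborel)" .
  have "(\<integral>\<^sup>+ s. ennreal (h s) \<partial>lborel) < \<infinity>" using tail_finite[OF q] unfolding h_def .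
  then have "2 + (\<integral>\<^sup>+ s. ennreal (h s) \<partial>lborel) + (\<integral>\<^sup>+ s. ennreal (h s) \<partial>lborel) < \<infinity>"
    by (simp add: less_top ennreal_add_eq_top)
  then show ?thesis using le by (rule le_less_trans[rotated])
qed


lemma scaled_int:
  fixes q t :: real assumes t: "t > 0"
  shows "(\<integral>\<^sup>+ s. ennreal ((1 + s\<^sup>2 / (4 * t)) powr (- q)) \<partial>lborel)
    = ennreal (2 * sqrt t) * (\<integral>\<^sup>+ s. ennreal ((1 + s\<^sup>2) powr (- q)) \<partial>lborel)"
proof -
  have c: "2 * sqrt t \<noteq> 0" using t by simp
  have "(\<integral>\<^sup>+ s. ennreal ((1 + s\<^sup>2 / (4 * t)) powr (- q)) \<partial>lborel)
    = ennreal \<bar>2 * sqrt t\<bar> * (\<integral>\<^sup>+ s. ennreal ((1 + (0 + 2 * sqrt t * s)\<^sup>2 / (4 * t)) powr (- q)) \<partial>lborel)"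
    by (rule nn_integral_real_affine[OF _ c]) measurable
  also have "(\<lambda>s. ennreal ((1 + (0 + 2 * sqrt t * s)\<^sup>2 / (4 * t)) powr (- q))) = (\<lambda>s. ennreal ((1 + s\<^sup>2) powr (- q)))"
    using t by (simp add: fun_eq_iff power_mult_distrib)
  finally show ?thesis using t by simp
qed

lemma prod_int:
  fixes q t :: real assumes t: "t > 0"
  shows "(\<integral>\<^sup>+ x. ennreal (\<Prod>i\<in>Basis. (1 + (x \<bullet> i)\<^sup>2 / (4 * t)) powr (- q)) \<partial>(lborel :: 'x::euclidean_space measure))
    = (ennreal (2 * sqrt t) * (\<integral>\<^sup>+ s. ennreal ((1 + s\<^sup>2) powr (- q)) \<partial>lborel)) ^ DIM('x)"
proof -
  have "(\<integral>\<^sup>+ x. ennreal (\<Prod>i\<in>Basis. (1 + (x \<bullet> i)\<^sup>2 / (4 * t)) powr (- q)) \<partial>(lborel :: 'x measure))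
     = (\<integral>\<^sup>+ x. (\<Prod>i\<in>(Basis::'x set). (\<lambda>i s. ennreal ((1 + s\<^sup>2 / (4 * t)) powr (- q))) i (x \<bullet> i)) \<partial>lborel)"
    by (simp add: prod_ennreal)
  also have "\<dots> = (\<Prod>i\<in>(Basis::'x set). (\<integral>\<^sup>+ s. ennreal ((1 + s\<^sup>2 / (4 * t)) powr (- q)) \<partial>lborel))"
    by (rule nn_integral_lborel_prod) auto
  also have "\<dots> = (ennreal (2 * sqrt t) * (\<integral>\<^sup>+ s. ennreal ((1 + s\<^sup>2) powr (- q)) \<partial>lborel)) ^ DIM('x)"
    using scaled_int[OF t] by simp
  finally show ?thesis .
qed

lemma prod_le_sum_pow:
  fixes y :: "'i \<Rightarrow> real"
  assumes "finite I" "\<And>i. i \<in> I \<Longrightarrow> 0 \<le> y i"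
  shows "(\<Prod>i\<in>I. 1 + y i) \<le> (1 + sum y I) ^ card I"
proof -
  have "(\<Prod>i\<in>I. 1 + y i) \<le> (\<Prod>i\<in>I. 1 + sum y I)"
  proof (rule prod_mono)
    fix i assume i: "i \<in> I"
    have "y i \<le> sum y I" using assms i by (intro member_le_sum) auto
    then show "0 \<le> 1 + y i \<and> 1 + y i \<le> 1 + sum y I" using assms(2)[OF i] by simp
  qed
  then show ?thesis by simp
qed

lemma sum_powr_bound:
  fixes y :: "'i \<Rightarrow> real"
  assumes "finite I" "I \<noteq> {}" "\<And>i. i \<in> I \<Longrightarrow> 0 \<le> y i" "0 \<le> p"
  shows "(1 + sum y I) powr (- p) \<le> (\<Prod>i\<in>I. (1 + y i) powr (- p / card I))"
proof -
  have N: "card I > 0" using assms by (simp add: card_gt_0_iff)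
  have s0: "0 \<le> sum y I" using assms by (intro sum_nonneg) auto
  have "(1 + sum y I) powr (- p) = ((1 + sum y I) ^ card I) powr (- p / card I)"
    using N s0 by (simp add: powr_realpow[symmetric] powr_powr)
  also have "\<dots> \<le> (\<Prod>i\<in>I. 1 + y i) powr (- p / card I)"
  proof (rule powr_mono2')
    show "- p / real (card I) \<le> 0" using assms N by simp
    show "0 < (\<Prod>i\<in>I. 1 + y i)" using assms by (intro prod_pos) (simp add: add_pos_nonneg)
    show "(\<Prod>i\<in>I. 1 + y i) \<le> (1 + sum y I) ^ card I" using prod_le_sum_pow assms by blast
  qed
  also have "\<dots> = (\<Prod>i\<in>I. (1 + y i) powr (- p / card I))" by (rule prod_powr_distrib)
  finally show ?thesis .
qed

context kummer
begin

lemma uu_bound: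
  fixes x :: "'x::euclidean_space"
  assumes t: "t > 0" and lam: "lam \<ge> 0" and b: "b \<ge> 1/2"
  shows "\<bar>uu (x, t)\<bar> powr lam \<le> (2 * b) powr (a * lam) * t powr (- (a * lam)) *
    (\<Prod>i\<in>Basis. (1 + (x \<bullet> i)\<^sup>2 / (4 * t)) powr (- (a * lam) / DIM('x)))"
proof -
  define r where "r = norm x ^ 2 / (4 * t)"
  have r0: "0 \<le> r" using t by (simp add: r_def)
  have rsum: "r = (\<Sum>i\<in>Basis. (x \<bullet> i)\<^sup>2 / (4 * t))"
  proof -
    have "norm x ^ 2 = (\<Sum>i\<in>Basis. (x \<bullet> i) * (x \<bullet> i))"
      by (simp add: power2_norm_eq_inner euclidean_inner[of x x])
    then show ?thesis by (simp add: r_def sum_divide_distrib power2_eq_square)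
  qed
  have Fp: "0 < F r" using F_pos[OF r0] .
  have u: "uu (x, t) = t powr (- a) * F r" by (simp add: uu_def r_def)
  let ?p = "a * lam"
  let ?P = "(\<Prod>i\<in>Basis. (1 + (x \<bullet> i)\<^sup>2 / (4 * t)) powr (- (a * lam) / DIM('x)))"
  have "\<bar>uu (x, t)\<bar> powr lam = (t powr (- a) * F r) powr lam" using Fp t by (simp add: u)
  also have "\<dots> \<le> (t powr (- a) * (b powr a * (b + r) powr (- a))) powr lam"
    using F_bound[OF r0] Fp t lam by (intro powr_mono2 mult_left_mono) auto
  also have "\<dots> = t powr (- ?p) * b powr ?p * (b + r) powr (- ?p)"
    by (simp add: powr_mult powr_powr)
  finally have A: "\<bar>uu (x, t)\<bar> powr lam \<le> t powr (- ?p) * b powr ?p * (b + r) powr (- ?p)" .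
  have B1: "(b + r) powr (- ?p) \<le> ((1 + r) / 2) powr (- ?p)"
    using b r0 a_pos lam by (intro powr_mono2') auto
  have B2a: "((1 + r) / 2) powr (- ?p) = (1 + r) powr (- ?p) / 2 powr (- ?p)"
    by (rule powr_divide)
  have B2b: "(2::real) powr (- ?p) = inverse (2 powr ?p)" by (rule powr_minus)
  have B2: "((1 + r) / 2) powr (- ?p) = 2 powr ?p * (1 + r) powr (- ?p)"
    unfolding B2a B2b by (simp add: divide_inverse mult.commute)
  have B3: "(1 + r) powr (- ?p) \<le> ?P"
    unfolding rsum using t a_pos lam by (intro sum_powr_bound) auto
  have B: "(b + r) powr (- ?p) \<le> 2 powr ?p * ?P"
  proof -
    have "2 powr ?p * (1 + r) powr (- ?p) \<le> 2 powr ?p * ?P" by (rule mult_left_mono[OF B3]) simp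
    then show ?thesis using order.trans[OF B1[unfolded B2]] by blast
  qed
  have C: "\<bar>uu (x, t)\<bar> powr lam \<le> t powr (- ?p) * b powr ?p * (2 powr ?p * ?P)"
  proof -
    have "t powr (- ?p) * b powr ?p * (b + r) powr (- ?p) \<le> t powr (- ?p) * b powr ?p * (2 powr ?p * ?P)"
      by (rule mult_left_mono[OF B]) simp
    then show ?thesis using order.trans[OF A] by blast
  qed
  have D: "t powr (- ?p) * b powr ?p * (2 powr ?p * ?P) = (2 * b) powr ?p * t powr (- ?p) * ?P"
    by (simp only: powr_mult mult_ac)
  show ?thesis using C unfolding D .
qed


lemma F_cont: "continuous_on UNIV F"
  using F_deriv by (meson DERIV_continuous continuous_at_imp_continuous_on)

lemma F_meas[measurable]: "F \<in> borel_measurable borel"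
  by (rule borel_measurable_continuous_onI[OF F_cont])

lemma time_int_finite:
  fixes C e T :: real assumes "e > -1" "T > 0" "C \<ge> 0"
  shows "(\<integral>\<^sup>+ t. ennreal (indicator {0<..<T} t * (C * t powr e)) \<partial>lborel) < \<infinity>"
proof -
  have "((\<lambda>t. C * t powr e) has_integral C * (T powr (e + 1) / (e + 1))) {0..T}"
    using assms by (intro has_integral_mult_right has_integral_powr_from_0) auto
  then have eq: "(\<integral>\<^sup>+ t. ennreal (indicator {0..T} t * (C * t powr e)) \<partial>lborel)
      = ennreal (C * (T powr (e + 1) / (e + 1)))"
    using assms by (intro nn_integral_has_integral_lebesgue) auto
  have "(\<integral>\<^sup>+ t. ennreal (indicator {0<..<T} t * (C * t powr e)) \<partial>lborel)
      \<le> (\<integral>\<^sup>+ t. ennreal (indicator {0..T} t * (C * t powr e)) \<partial>lborel)"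
    using assms by (intro nn_integral_mono ennreal_leI) (auto simp: indicator_def)
  also have "\<dots> < \<infinity>" unfolding eq by simp
  finally show ?thesis .
qed

lemma uu_integrable:
  assumes lam: "lam \<ge> 0" and b: "b \<ge> 1/2" and q: "a * lam / DIM('x) > 1/2"
    and e: "DIM('x) / 2 - a * lam > -1" and T: "T > 0"
  shows "set_integrable lborel (UNIV \<times> {0<..<T}) (\<lambda>z::'x::euclidean_space \<times> real. \<bar>uu z\<bar> powr lam)"
proof -
  define N where "N = DIM('x)"
  define p where "p = a * lam"
  define K where "K = (2 * b) powr p"
  define I1 where "I1 = (\<integral>\<^sup>+ s. ennreal ((1 + s\<^sup>2) powr (- (p / N))) \<partial>lborel)"
  have I1fin: "I1 < \<infinity>" unfolding I1_def using q by (intro powr_int_finite) (simp add: p_def N_def)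
  define Bnd :: "'x \<times> real \<Rightarrow> ennreal" where
    "Bnd z = ennreal (indicator {0<..<T} (snd z) * (K * snd z powr (- p) *
       (\<Prod>i\<in>Basis. (1 + (fst z \<bullet> i)\<^sup>2 / (4 * snd z)) powr (- p / N))))" for z
  have K0: "K \<ge> 0" by (simp add: K_def)
  have meas_u: "(\<lambda>z::'x \<times> real. indicator (UNIV \<times> {0<..<T}) z *\<^sub>R (\<bar>uu z\<bar> powr lam)) \<in> borel_measurable lborel"
  proof -
    have ind: "indicator (UNIV \<times> {0<..<T}) z = (indicator {0<..<T} (snd z) :: real)" for z :: "'x \<times> real"
      by (cases z) (simp add: indicator_def)
    have "(\<lambda>z::'x \<times> real. indicator {0<..<T} (snd z) *\<^sub>R (\<bar>uu z\<bar> powr lam)) \<in> borel_measurable (lborel \<Otimes>\<^sub>M lborel)"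
      unfolding uu_def by measurable
    then show ?thesis unfolding ind by (simp only: lborel_prod)
  qed
  have Bmeas: "Bnd \<in> borel_measurable (lborel \<Otimes>\<^sub>M lborel)"
    unfolding Bnd_def by measurable
  have bound: "ennreal (norm (indicator (UNIV \<times> {0<..<T}) z *\<^sub>R (\<bar>uu z\<bar> powr lam))) \<le> Bnd z" for z :: "'x \<times> real"
  proof (cases "snd z \<in> {0<..<T}")
    case True
    obtain x t where z: "z = (x, t)" by (cases z)
    have t: "t > 0" using True z by simp
    have "norm (indicator (UNIV \<times> {0<..<T}) z *\<^sub>R (\<bar>uu z\<bar> powr lam)) = \<bar>uu (x, t)\<bar> powr lam"
      using True z by (simp add: indicator_def)
    also have "\<dots> \<le> K * t powr (- p) * (\<Prod>i\<in>Basis. (1 + (x \<bullet> i)\<^sup>2 / (4 * t)) powr (- p / N))"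
      using uu_bound[OF t lam b, of x] by (simp add: K_def p_def N_def)
    finally show ?thesis unfolding Bnd_def using True z by (intro ennreal_leI) simp
  next
    case False
    then show ?thesis by (cases z) (auto simp: Bnd_def indicator_def)
  qed
  have inner: "(\<integral>\<^sup>+ x. Bnd (x, t) \<partial>lborel) =
      ennreal (indicator {0<..<T} t * (K * t powr (- p) * (2 * sqrt t) ^ N)) * I1 ^ N" for t
  proof (cases "t \<in> {0<..<T}")
    case True
    then have t: "t > 0" by simp
    have "(\<integral>\<^sup>+ x. Bnd (x, t) \<partial>lborel) = (\<integral>\<^sup>+ (x::'x). ennreal (K * t powr (- p)) *
        ennreal (\<Prod>i\<in>Basis. (1 + (x \<bullet> i)\<^sup>2 / (4 * t)) powr (- p / N)) \<partial>lborel)"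
      using True K0 by (intro nn_integral_cong) (simp add: Bnd_def ennreal_mult[symmetric] prod_nonneg mult.assoc)
    also have "\<dots> = ennreal (K * t powr (- p)) * (\<integral>\<^sup>+ (x::'x).
        ennreal (\<Prod>i\<in>Basis. (1 + (x \<bullet> i)\<^sup>2 / (4 * t)) powr (- p / N)) \<partial>lborel)"
      by (rule nn_integral_cmult) measurable
    also have "(\<integral>\<^sup>+ x. ennreal (\<Prod>i\<in>Basis. (1 + (x \<bullet> i)\<^sup>2 / (4 * t)) powr (- p / N)) \<partial>(lborel :: 'x measure))
        = (ennreal (2 * sqrt t) * I1) ^ N"
      using prod_int[OF t, of "p / N", where 'x='x] by (simp add: I1_def N_def)
    also have "(ennreal (2 * sqrt t) * I1) ^ N = ennreal ((2 * sqrt t) ^ N) * I1 ^ N"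
      using t by (simp add: power_mult_distrib ennreal_power)
    finally have f: "(\<integral>\<^sup>+ x. Bnd (x, t) \<partial>lborel) = ennreal (K * t powr (- p)) * (ennreal ((2 * sqrt t) ^ N) * I1 ^ N)" .
    have e: "ennreal (K * (t powr (- p) * (2 ^ N * sqrt t ^ N))) = ennreal (K * t powr (- p)) * ennreal (2 ^ N * sqrt t ^ N)"
      using K0 t by (simp add: ennreal_mult[symmetric] mult.assoc)
    show ?thesis unfolding f using True by (simp add: e mult.assoc)
  next
    case False
    then show ?thesis by (auto simp: Bnd_def indicator_def)
  qed
  have "(\<integral>\<^sup>+ z. Bnd z \<partial>lborel) = (\<integral>\<^sup>+ z. Bnd z \<partial>(lborel \<Otimes>\<^sub>M lborel))"
    by (simp only: lborel_prod)
  also have "\<dots> = (\<integral>\<^sup>+ t. (\<integral>\<^sup>+ x. Bnd (x, t) \<partial>lborel) \<partial>lborel)"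
    by (rule lborel_pair.nn_integral_snd[OF Bmeas, symmetric])
  also have "\<dots> = (\<integral>\<^sup>+ t. ennreal (indicator {0<..<T} t * (K * t powr (- p) * (2 * sqrt t) ^ N)) * I1 ^ N \<partial>lborel)"
    by (simp only: inner)
  also have "\<dots> = (\<integral>\<^sup>+ t. ennreal (indicator {0<..<T} t * (K * t powr (- p) * (2 * sqrt t) ^ N)) \<partial>lborel) * I1 ^ N"
    by (rule nn_integral_multc) measurable
  also have "(\<integral>\<^sup>+ t. ennreal (indicator {0<..<T} t * (K * t powr (- p) * (2 * sqrt t) ^ N)) \<partial>lborel)
      = (\<integral>\<^sup>+ t. ennreal (indicator {0<..<T} t * ((K * 2 ^ N) * t powr (N / 2 - p))) \<partial>lborel)"
  proof (intro nn_integral_cong)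
    fix t :: real
    show "ennreal (indicator {0<..<T} t * (K * t powr (- p) * (2 * sqrt t) ^ N)) =
        ennreal (indicator {0<..<T} t * ((K * 2 ^ N) * t powr (N / 2 - p)))"
    proof (cases "t \<in> {0<..<T}")
      case True
      then have t: "t > 0" by simp
      have "sqrt t ^ N = t powr (N / 2)"
        using t by (simp add: powr_half_sqrt[symmetric] powr_realpow[symmetric] powr_powr)
      moreover have "t powr (N / 2 - p) = t powr (N / 2) * t powr (- p)"
        by (simp add: powr_add[symmetric])
      ultimately show ?thesis using True by (simp add: power_mult_distrib mult_ac)
    qed simp
  qed
  finally have fin: "(\<integral>\<^sup>+ z. Bnd z \<partial>lborel) < \<infinity>"
    using time_int_finite[of "N / 2 - p" T "K * 2 ^ N"] e T K0 I1fin
    by (simp add: N_def p_def ennreal_mult_less_top power_less_top_ennreal)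
  have "(\<integral>\<^sup>+ (z::'x \<times> real). ennreal (norm (indicator (UNIV \<times> {0<..<T}) z *\<^sub>R (\<bar>uu z\<bar> powr lam))) \<partial>lborel)
     \<le> (\<integral>\<^sup>+ z. Bnd z \<partial>lborel)"
    by (intro nn_integral_mono bound)
  then have "(\<integral>\<^sup>+ (z::'x \<times> real). ennreal (norm (indicator (UNIV \<times> {0<..<T}) z *\<^sub>R (\<bar>uu z\<bar> powr lam))) \<partial>lborel) < \<infinity>"
    using fin by (rule le_less_trans)
  then show ?thesis
    unfolding set_integrable_def using meas_u by (simp add: integrable_iff_bounded)
qed

end

theorem theorem1p2:
  fixes lam \<gamma> \<epsilon> :: real
  assumes "lam \<ge> (real CARD('n) + 2) / real CARD('n)"
    and "0 < \<epsilon>" and "\<epsilon> < 1"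
    and "\<gamma> = (real CARD('n) + 2 - \<epsilon>) / (2 * lam)"
  shows "\<exists>u :: (real^'n) \<times> real \<Rightarrow> real.
    smooth_on (UNIV \<times> {0<..}) u
    \<and> (\<forall>x t. t > 0 \<longrightarrow> u (x, t) > 0)
    \<and> (\<forall>x t. t > 0 \<longrightarrow>
          pdiff (0, 1) u (x, t) = (\<Sum>i\<in>Basis. pdiff (i, 0) (pdiff (i, 0) u) (x, t)))
    \<and> (\<forall>T>0. set_integrable lborel (UNIV \<times> {0<..<T}) (\<lambda>z. \<bar>u z\<bar> powr lam))
    \<and> (\<forall>t>0. u (0, t) = t powr (- \<gamma>))"
proof -
  define n where "n = real CARD('n)"
  have n1: "n \<ge> 1" unfolding n_def by simp
  have lam_n: "lam * n \<ge> n + 2" using assms(1) n1 unfolding n_def[symmetric] by (simp add: field_simps)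
  have lam: "lam > 0" using lam_n n1 by (smt (verit) mult_nonpos_nonneg)
  have gl: "\<gamma> * lam = (n + 2 - \<epsilon>) / 2" using assms(4) lam unfolding n_def[symmetric] by (simp add: field_simps)
  have g0: "\<gamma> > 0" unfolding assms(4) n_def[symmetric] using assms(3) lam n1 by (intro divide_pos_pos) auto
  have gb: "\<gamma> < n / 2"
  proof -
    have "\<gamma> * lam < (n / 2) * lam" using gl lam_n assms(2) by (simp add: field_simps)
    then show ?thesis using lam by simp
  qed
  interpret K: kummer \<gamma> "n / 2" using g0 gb by unfold_locales auto
  have dim: "DIM(real^'n) = CARD('n)" by simp
  let ?u = "K.uu :: (real^'n) \<times> real \<Rightarrow> real"
  show ?thesis
  proof (intro exI[of _ ?u] conjI allI impI)
    show "smooth_on (UNIV \<times> {0<..}) ?u" unfolding smooth_on_def using K.uu_smooth by blast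
  next
    fix x :: "real^'n" and t :: real assume t: "t > 0"
    have "0 < K.F (norm x ^ 2 / (4 * t))" using t by (intro K.F_pos) simp
    then show "?u (x, t) > 0" using t by (simp add: K.uu_def)
  next
    fix x :: "real^'n" and t :: real assume t: "t > 0"
    show "pdiff (0, 1) ?u (x, t) = (\<Sum>i\<in>Basis. pdiff (i, 0) (pdiff (i, 0) ?u) (x, t))"
      by (rule K.uu_heat[OF t]) (simp add: n_def)
  next
    fix T :: real assume T: "T > 0"
    show "set_integrable lborel (UNIV \<times> {0<..<T}) (\<lambda>z. \<bar>?u z\<bar> powr lam)"
    proof (rule K.uu_integrable[OF _ _ _ _ T])
      show "0 \<le> lam" using lam by simp
      show "1 / 2 \<le> n / 2" using n1 by simp
      show "1 / 2 < \<gamma> * lam / real DIM(real^'n)"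
        unfolding dim n_def[symmetric] gl using n1 assms(3) by (simp add: field_simps)
      show "- 1 < real DIM(real^'n) / 2 - \<gamma> * lam"
        unfolding dim n_def[symmetric] gl using assms(2) by (simp add: field_simps)
    qed
  next
    fix t :: real assume t: "t > 0"
    show "?u (0, t) = t powr (- \<gamma>)" by (simp add: K.uu_def K.F_0)
  qed
qed

end
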